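(* Let $d\ge1$, $0<s_0<s_1$, $0<\alpha_0<\alpha_1$, $W=[s_0,s_1]\times[\alpha_0,\alpha_1]$ with interior $W^\circ$, let $g\in L^2_0(\mathbb{T}^d;\mathbb{C})$ and $u_d\in L^2(\mathbb{T}^d;\mathbb{C})$ with Fourier coefficient sequences $\widehat{\mathbf G}=(\hat g_k)_k$, $\widehat{\mathbf U}_d=(\hat u_{d,k})_k$. Let $\varphi\in C^2(W^\circ,\mathbb{R})$ be non-negative and convex with $\varphi(s,\alpha)\to\infty$ whenever $s\to s_0$, $s\to s_1$, $\alpha\to\alpha_0$ or $\alpha\to\alpha_1$. Define $\mathcal{S}(s,\alpha)=\big(\frac{\alpha}{\alpha+|k|^{2s}}\hat g_k\big)_{k\in\mathbb{Z}^d}$ and $$j(s,\alpha)=\frac{1}{2(2\pi)^d}\|\mathcal{S}(s,\alpha)-\widehat{\mathbf U}_d\|_{\ell^2}^2+\varphi(s,\alpha),\quad (s,\alpha)\in W^\circ.$$ Then there exists $(\bar s,\bar\alpha)\in W^\circ$ with $j(\bar s,\bar\alpha)\le j(s,\alpha)$ for all $(s,\alpha)\in W^\circ$ (i.e. an optimal triple $(\bar s,\bar\alpha,\mathcal{S}(\bar s,\bar\alpha))$ exists), and the function with Fourier coefficients $\mathcal{S}(\bar s,\bar\alpha)$ lies in $H^{2\bar s}_0(\mathbb{T}^d;\mathbb{C})$.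
   Context: $\mathbb{T}^d=\mathbb{R}^d/(2\pi\mathbb{Z})^d$; $\hat u_k=\int_{\mathbb{T}^d}u\,e^{-ik\cdot x}dx$; convention $|0|^{2s}=0$. $L^2_0$ is the zero-mean subspace of $L^2$. For $\sigma\ge0$, $H^\sigma_0(\mathbb{T}^d;\mathbb{C})=\{u\in L^2_0:\sum_{k\ne0}|k|^{2\sigma}|\hat u_k|^2<\infty\}$. $\mathcal{S}(s,\alpha)$ is the Fourier coefficient sequence of the solution $u$ of $(-\Delta)^su+\alpha u=\alpha g$, where $(-\Delta)^s u=(2\pi)^{-d}\sum_k|k|^{2s}\hat u_k e^{ik\cdot x}$. *)

theory Defs
  imports "HOL-Analysis.Analysis"
begin

text \<open>Frequencies k in Z^d are modelled as int ^ 'd (the dimension d = CARD('d) \<ge> 1).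
  Functions on the torus are represented by their Fourier coefficient sequences.\<close>

definition knorm :: "int ^ 'd \<Rightarrow> real" where
  "knorm k = sqrt (\<Sum>i\<in>UNIV. (real_of_int (k $ i))\<^sup>2)"

text \<open>l^2 sequences on Z^d (= Fourier coefficients of L^2 functions, by Riesz-Fischer).\<close>
definition ell2 :: "(int ^ 'd \<Rightarrow> complex) \<Rightarrow> bool" where
  "ell2 c \<longleftrightarrow> (\<lambda>k. (cmod (c k))\<^sup>2) summable_on UNIV"

definition ell2_norm_sq :: "(int ^ 'd \<Rightarrow> complex) \<Rightarrow> real" where
  "ell2_norm_sq c = infsum (\<lambda>k. (cmod (c k))\<^sup>2) UNIV"

text \<open>Coefficient sequence of a function in L^2_0 (zero mean).\<close>
definition L2_0 :: "(int ^ 'd \<Rightarrow> complex) \<Rightarrow> bool" where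
  "L2_0 c \<longleftrightarrow> ell2 c \<and> c 0 = 0"

text \<open>Coefficient sequence of a function in H^sigma_0; convention |0|^(2 sigma) = 0 via powr.\<close>
definition H0 :: "real \<Rightarrow> (int ^ 'd \<Rightarrow> complex) \<Rightarrow> bool" where
  "H0 \<sigma> c \<longleftrightarrow> L2_0 c \<and> (\<lambda>k. knorm k powr (2 * \<sigma>) * (cmod (c k))\<^sup>2) summable_on UNIV"

text \<open>S(s,alpha): Fourier coefficients of the solution of (-Delta)^s u + alpha u = alpha g.\<close>
definition solS :: "(int ^ 'd \<Rightarrow> complex) \<Rightarrow> real \<Rightarrow> real \<Rightarrow> int ^ 'd \<Rightarrow> complex" where
  "solS G s \<alpha> k = complex_of_real (\<alpha> / (\<alpha> + knorm k powr (2 * s))) * G k"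

definition C2_on :: "('a::real_normed_vector) set \<Rightarrow> ('a \<Rightarrow> real) \<Rightarrow> bool" where
  "C2_on S f \<longleftrightarrow> (\<exists>Df :: 'a \<Rightarrow> ('a \<Rightarrow>\<^sub>L real). \<exists>D2f :: 'a \<Rightarrow> ('a \<Rightarrow>\<^sub>L ('a \<Rightarrow>\<^sub>L real)).
      (\<forall>x\<in>S. (f has_derivative blinfun_apply (Df x)) (at x)) \<and>
      (\<forall>x\<in>S. (Df has_derivative blinfun_apply (D2f x)) (at x)) \<and>
      continuous_on S D2f)"

end

theory Submission
  imports Defs
begin

lemma infsum_cont:
  fixes f :: "'k \<Rightarrow> 'a::metric_space \<Rightarrow> real" and h :: "'k \<Rightarrow> real"
  assumes cont: "\<And>k. continuous_on S (f k)"
    and nn: "\<And>k x. x \<in> S \<Longrightarrow> 0 \<le> f k x"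
    and le: "\<And>k x. x \<in> S \<Longrightarrow> f k x \<le> h k"
    and hs: "h summable_on UNIV"
  shows "continuous_on S (\<lambda>x. infsum (\<lambda>k. f k x) UNIV)"
proof (rule uniform_limit_theorem)
  show "\<forall>\<^sub>F F in finite_subsets_at_top UNIV. continuous_on S (\<lambda>x. sum (\<lambda>k. f k x) F)"
    by (intro always_eventually allI continuous_on_sum cont)
  show "\<not> trivial_limit (finite_subsets_at_top (UNIV :: 'k set))"
    by (simp add: finite_subsets_at_top_neq_bot)
  show "uniform_limit S (\<lambda>F x. sum (\<lambda>k. f k x) F) (\<lambda>x. infsum (\<lambda>k. f k x) UNIV)
          (finite_subsets_at_top UNIV)"
  proof (rule uniform_limitI)
    fix e :: real assume e: "e > 0"
    have "\<forall>\<^sub>F F in finite_subsets_at_top UNIV. dist (sum h F) (infsum h UNIV) < e"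
      using tendstoD[OF infsum_tendsto[OF hs] e] .
    moreover have "\<forall>\<^sub>F F in finite_subsets_at_top UNIV. finite F"
      by (simp add: eventually_finite_subsets_at_top_weakI)
    ultimately show "\<forall>\<^sub>F F in finite_subsets_at_top UNIV. \<forall>x\<in>S.
        dist (sum (\<lambda>k. f k x) F) (infsum (\<lambda>k. f k x) UNIV) < e"
    proof eventually_elim
      case (elim F)
      show ?case
      proof
        fix x assume x: "x \<in> S"
        have fs: "(\<lambda>k. f k x) summable_on UNIV"
          by (rule summable_on_comparison_test[OF hs]) (use le nn x in auto)
        have fsF: "(\<lambda>k. f k x) summable_on F" using elim by simp
        have hsF: "h summable_on F" using elim by simp
        have fsD: "(\<lambda>k. f k x) summable_on (UNIV - F)"
          by (rule summable_on_Diff[OF fs fsF]) simp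
        have hsD: "h summable_on (UNIV - F)"
          by (rule summable_on_Diff[OF hs hsF]) simp
        have e1: "infsum (\<lambda>k. f k x) (UNIV - F) = infsum (\<lambda>k. f k x) UNIV - sum (\<lambda>k. f k x) F"
          using infsum_Diff[OF fs fsF] elim by simp
        have e2: "infsum h (UNIV - F) = infsum h UNIV - sum h F"
          using infsum_Diff[OF hs hsF] elim by simp
        have a: "0 \<le> infsum (\<lambda>k. f k x) (UNIV - F)"
          by (rule infsum_nonneg) (use nn x in auto)
        have b: "infsum (\<lambda>k. f k x) (UNIV - F) \<le> infsum h (UNIV - F)"
          by (rule infsum_mono[OF fsD hsD]) (use le x in auto)
        show "dist (sum (\<lambda>k. f k x) F) (infsum (\<lambda>k. f k x) UNIV) < e"
          using a b e1 e2 elim by (auto simp: dist_real_def)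
      qed
    qed
  qed
qed


lemma knorm_nonneg: "0 \<le> knorm k"
  unfolding knorm_def by (simp add: sum_nonneg)

lemma coef_bounds:
  assumes "(a::real) > 0"
  shows "0 \<le> a / (a + knorm k powr (2 * s))" "a / (a + knorm k powr (2 * s)) \<le> 1"
proof -
  have t: "0 \<le> knorm k powr (2 * s)" by simp
  show "0 \<le> a / (a + knorm k powr (2 * s))" using assms t by (intro divide_nonneg_nonneg) auto
  have d: "0 < a + knorm k powr (2 * s)" using assms powr_ge_zero[of "knorm k" "2 * s"] by linarith
  show "a / (a + knorm k powr (2 * s)) \<le> 1"
    using d powr_ge_zero[of "knorm k" "2 * s"] by (subst divide_le_eq_1_pos) auto
qed

lemma cont_coef:
  assumes "\<And>p. p \<in> P \<Longrightarrow> snd p > 0"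
  shows "continuous_on P (\<lambda>p::real\<times>real. snd p / (snd p + knorm k powr (2 * fst p)))"
proof (cases "knorm k = 0")
  case True
  have "continuous_on P (\<lambda>p::real\<times>real. 1::real)" by simp
  then show ?thesis
  proof (rule continuous_on_cong[THEN iffD1, rotated -1])
    fix x assume "x \<in> P"
    then have "snd x > 0" using assms by blast
    then show "1 = snd x / (snd x + knorm k powr (2 * fst x))" using True by simp
  qed simp
next
  case False
  then have kp: "knorm k > 0" using knorm_nonneg[of k] by simp
  have "continuous_on P (\<lambda>p::real\<times>real. knorm k powr (2 * fst p))"
    using kp by (intro continuous_intros) auto
  moreover have "\<And>p. p \<in> P \<Longrightarrow> snd p + knorm k powr (2 * fst p) \<noteq> 0"
    using assms by (smt (verit) powr_ge_zero)
  ultimately show ?thesis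
    by (intro continuous_intros) (use kp in auto)
qed

lemma cont_sq:
  assumes "continuous_on P c"
  shows "continuous_on P (\<lambda>p. (cmod (complex_of_real (c p) * A - B))\<^sup>2)"
  using assms by (intro continuous_intros)

lemma data_cont:
  assumes "ell2 G" "ell2 Ud"
    and "\<And>p. p \<in> P \<Longrightarrow> snd p > 0"
  shows "continuous_on P (\<lambda>p::real\<times>real. ell2_norm_sq (\<lambda>k. solS G (fst p) (snd p) k - Ud k))"
proof -
  let ?h = "\<lambda>k. 2 * (cmod (G k))\<^sup>2 + 2 * (cmod (Ud k))\<^sup>2"
  have hs: "?h summable_on UNIV"
    using assms(1,2) unfolding ell2_def
    by (intro summable_on_add summable_on_cmult_right) auto
  show ?thesis
    unfolding ell2_norm_sq_def solS_def
  proof (rule infsum_cont[where h = ?h, OF _ _ _ hs])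
    fix k
    show "continuous_on P (\<lambda>p. (cmod (complex_of_real (snd p / (snd p + knorm k powr (2 * fst p))) * G k - Ud k))\<^sup>2)"
      by (rule cont_sq[OF cont_coef]) (rule assms(3))
  next
    fix k and p :: "real \<times> real"
    show "0 \<le> (cmod (complex_of_real (snd p / (snd p + knorm k powr (2 * fst p))) * G k - Ud k))\<^sup>2"
      by simp
    assume p: "p \<in> P"
    define a where "a = snd p / (snd p + knorm k powr (2 * fst p))"
    have a01: "0 \<le> a" "a \<le> 1" unfolding a_def using coef_bounds assms(3)[OF p] by auto
    have "cmod (complex_of_real a * G k - Ud k) \<le> cmod (complex_of_real a * G k) + cmod (Ud k)"
      by (rule norm_triangle_ineq4)
    also have "\<dots> \<le> cmod (G k) + cmod (Ud k)"
      using a01 by (simp add: norm_mult mult_left_le_one_le)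
    finally have "cmod (complex_of_real a * G k - Ud k) \<le> cmod (G k) + cmod (Ud k)" .
    then have "(cmod (complex_of_real a * G k - Ud k))\<^sup>2 \<le> (cmod (G k) + cmod (Ud k))\<^sup>2"
      by (intro power_mono) auto
    also have "\<dots> \<le> ?h k"
      by (smt (verit) sum_squares_bound norm_ge_zero power2_sum)
    finally show "(cmod (complex_of_real (snd p / (snd p + knorm k powr (2 * fst p))) * G k - Ud k))\<^sup>2 \<le> ?h k"
      unfolding a_def .
  qed
qed

lemma H0_sol:
  fixes G :: "int ^ 'd \<Rightarrow> complex"
  assumes "L2_0 G" "ab > 0"
  shows "H0 (2 * sb) (solS G sb ab)"
proof -
  have g: "(\<lambda>k. (cmod (G k))\<^sup>2) summable_on UNIV" "G 0 = 0"
    using assms(1) unfolding L2_0_def ell2_def by auto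
  have ell: "ell2 (solS G sb ab)"
    unfolding ell2_def
  proof (rule summable_on_comparison_test[OF g(1)])
    fix k :: "int ^ 'd"
    define a where "a = ab / (ab + knorm k powr (2 * sb))"
    have a01: "0 \<le> a" "a \<le> 1" unfolding a_def using coef_bounds[OF assms(2), of k sb] by auto
    have "solS G sb ab k = complex_of_real a * G k" by (simp add: solS_def a_def)
    then have "cmod (solS G sb ab k) = a * cmod (G k)" using a01 by (simp add: norm_mult)
    then have "cmod (solS G sb ab k) \<le> cmod (G k)"
      using a01 by (simp add: mult_left_le_one_le)
    then show "(cmod (solS G sb ab k))\<^sup>2 \<le> (cmod (G k))\<^sup>2"
      by (intro power_mono) auto
  qed simp
  have hs: "(\<lambda>k. ab\<^sup>2 * (cmod (G k))\<^sup>2) summable_on UNIV"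
    using g(1) by (intro summable_on_cmult_right)
  have sm: "(\<lambda>k. knorm k powr (2 * (2 * sb)) * (cmod (solS G sb ab k))\<^sup>2) summable_on UNIV"
  proof (rule summable_on_comparison_test[OF hs])
    fix k :: "int ^ 'd"
    define t where "t = knorm k powr (2 * sb)"
    have t0: "t \<ge> 0" unfolding t_def by simp
    have pw: "knorm k powr (2 * (2 * sb)) = t\<^sup>2"
      unfolding t_def power2_eq_square powr_add[symmetric] by simp
    define a where "a = ab / (ab + t)"
    have a01: "0 \<le> a" "a \<le> 1" unfolding a_def t_def using coef_bounds[OF assms(2), of k sb] by auto
    have ta: "t * a \<le> ab"
    proof -
      have "t / (ab + t) \<le> 1" using t0 assms(2) by (subst divide_le_eq_1_pos) auto
      moreover have "t * a = ab * (t / (ab + t))" unfolding a_def by simp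
      moreover have "ab * (t / (ab + t)) \<le> ab"
        by (rule mult_right_le_one_le) (use t0 assms(2) \<open>t / (ab + t) \<le> 1\<close> in auto)
      ultimately show ?thesis by linarith
    qed
    moreover have "0 \<le> t * a" using t0 a01 by simp
    ultimately have "(t * a)\<^sup>2 \<le> ab\<^sup>2"
      by (intro power_mono) auto
    then have "t\<^sup>2 * a\<^sup>2 * (cmod (G k))\<^sup>2 \<le> ab\<^sup>2 * (cmod (G k))\<^sup>2"
      by (intro mult_right_mono) (auto simp: power_mult_distrib)
    moreover have "solS G sb ab k = complex_of_real a * G k" by (simp add: solS_def a_def t_def)
    then have "(cmod (solS G sb ab k))\<^sup>2 = a\<^sup>2 * (cmod (G k))\<^sup>2"
      using a01 by (simp add: norm_mult power_mult_distrib)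
    ultimately show "knorm k powr (2 * (2 * sb)) * (cmod (solS G sb ab k))\<^sup>2 \<le> ab\<^sup>2 * (cmod (G k))\<^sup>2"
      using pw by (simp add: mult.assoc)
  qed simp
  show ?thesis
    unfolding H0_def L2_0_def using ell sm g(2) by (simp add: solS_def)
qed


theorem theorem3:
  fixes G Ud :: "int ^ 'd \<Rightarrow> complex"
    and \<phi> :: "real \<times> real \<Rightarrow> real"
    and s0 s1 \<alpha>0 \<alpha>1 :: real
  assumes "0 < s0" "s0 < s1" "0 < \<alpha>0" "\<alpha>0 < \<alpha>1"
    and "L2_0 G" and "ell2 Ud"
    and "C2_on ({s0<..<s1} \<times> {\<alpha>0<..<\<alpha>1}) \<phi>"
    and "\<forall>p\<in>{s0<..<s1} \<times> {\<alpha>0<..<\<alpha>1}. 0 \<le> \<phi> p"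
    and "convex_on ({s0<..<s1} \<times> {\<alpha>0<..<\<alpha>1}) \<phi>"
    and "\<forall>p \<in> ({s0..s1} \<times> {\<alpha>0..\<alpha>1}) - ({s0<..<s1} \<times> {\<alpha>0<..<\<alpha>1}).
           filterlim \<phi> at_top (at p within ({s0<..<s1} \<times> {\<alpha>0<..<\<alpha>1}))"
    and "j = (\<lambda>s \<alpha>. 1 / (2 * (2 * pi) ^ CARD('d)) * ell2_norm_sq (\<lambda>k. solS G s \<alpha> k - Ud k)
                    + \<phi> (s, \<alpha>))"
  shows "\<exists>sb ab. sb \<in> {s0<..<s1} \<and> ab \<in> {\<alpha>0<..<\<alpha>1} \<and>
           (\<forall>s\<in>{s0<..<s1}. \<forall>\<alpha>\<in>{\<alpha>0<..<\<alpha>1}. j sb ab \<le> j s \<alpha>) \<and>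
           H0 (2 * sb) (solS G sb ab)"
proof -
  define P where "P = {s0<..<s1} \<times> {\<alpha>0<..<\<alpha>1}"
  define R where "R = {s0..s1} \<times> {\<alpha>0..\<alpha>1}"
  define c where "c = 1 / (2 * (2 * pi) ^ CARD('d))"
  define D where "D = (\<lambda>p::real\<times>real. ell2_norm_sq (\<lambda>k. solS G (fst p) (snd p) k - Ud k))"
  define J where "J = (\<lambda>p::real\<times>real. j (fst p) (snd p))"
  have Jeq: "J p = c * D p + \<phi> p" for p
    using assms(11) unfolding J_def D_def c_def by (cases p) simp
  have c0: "c \<ge> 0" unfolding c_def by simp
  have snd_pos: "\<And>p. p \<in> P \<Longrightarrow> snd p > 0" using assms(3) by (auto simp: P_def)
  have G2: "ell2 G" using assms(5) by (simp add: L2_0_def)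
  have Dcont: "continuous_on P D"
    unfolding D_def by (rule data_cont[OF G2 assms(6) snd_pos])
  have D0: "0 \<le> D p" for p
    unfolding D_def ell2_norm_sq_def by (intro infsum_nonneg) auto
  have phicont: "continuous_on P \<phi>"
  proof -
    obtain Df :: "(real \<times> real) \<Rightarrow> ((real \<times> real) \<Rightarrow>\<^sub>L real)" where
      Df: "\<forall>x\<in>P. (\<phi> has_derivative blinfun_apply (Df x)) (at x)"
      using assms(7) unfolding C2_on_def P_def by blast
    show ?thesis
      by (rule continuous_at_imp_continuous_on) (use Df has_derivative_continuous in blast)
  qed
  have Jcont: "continuous_on P J"
    unfolding Jeq by (intro continuous_intros Dcont phicont)
  have phiJ: "\<phi> p \<le> J p" for p
    unfolding Jeq using c0 D0[of p] by simp
  define p0 where "p0 = ((s0 + s1) / 2, (\<alpha>0 + \<alpha>1) / 2)"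
  have p0P: "p0 \<in> P" unfolding p0_def P_def using assms(2,4) by auto
  define M where "M = J p0"
  define K where "K = {p \<in> P. J p \<le> M}"
  have KR: "K \<subseteq> R" unfolding K_def P_def R_def by auto
  have PR: "P \<subseteq> R" unfolding P_def R_def by auto
  have Rc: "compact R" unfolding R_def by (intro compact_Times compact_Icc)
  have Kcl: "closed K"
    unfolding closed_sequential_limits
  proof (intro allI impI, elim conjE)
    fix x :: "nat \<Rightarrow> real \<times> real" and l
    assume xK: "\<forall>n. x n \<in> K" and xl: "x \<longlonglongrightarrow> l"
    have lR: "l \<in> R"
      using closed_sequentially[OF compact_imp_closed[OF Rc] _ xl] xK KR by blast
    show "l \<in> K"
    proof (cases "l \<in> P")
      case True
      have "(\<lambda>n. J (x n)) \<longlonglongrightarrow> J l"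
        using continuous_on_tendsto_compose[OF Jcont xl True] xK unfolding K_def by auto
      then have "J l \<le> M"
        by (rule tendsto_upperbound) (use xK in \<open>auto simp: K_def\<close>)
      then show ?thesis using True unfolding K_def by simp
    next
      case False
      have lim: "filterlim \<phi> at_top (at l within P)"
        using assms(10) lR False unfolding P_def R_def by blast
      have "filterlim x (at l within P) sequentially"
      proof -
        have xP: "x n \<in> P \<and> x n \<noteq> l" for n using xK False unfolding K_def by auto
        show ?thesis unfolding filterlim_at using xP xl by (simp add: always_eventually)
      qed
      then have "filterlim (\<lambda>n. \<phi> (x n)) at_top sequentially"
        using filterlim_compose[OF lim] by blast
      then have "eventually (\<lambda>n. \<phi> (x n) > M) sequentially"
        by (simp add: filterlim_at_top_dense)
      moreover have "\<phi> (x n) \<le> M" for n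
      proof -
        have "J (x n) \<le> M" using xK unfolding K_def by blast
        then show ?thesis using phiJ[of "x n"] by linarith
      qed
      ultimately have "eventually (\<lambda>n. False) sequentially"
        by (auto elim: eventually_mono simp: not_less[symmetric])
      then show ?thesis by simp
    qed
  qed
  have Kc: "compact K"
  proof -
    have "compact (R \<inter> K)" by (rule compact_Int_closed[OF Rc Kcl])
    moreover have "R \<inter> K = K" using KR by blast
    ultimately show ?thesis by simp
  qed
  have "p0 \<in> K" using p0P unfolding K_def M_def by simp
  then have Kne: "K \<noteq> {}" by blast
  have JcK: "continuous_on K J" using Jcont by (rule continuous_on_subset) (auto simp: K_def)
  obtain q where qK: "q \<in> K" and qmin: "\<forall>y\<in>K. J q \<le> J y"
    using continuous_attains_inf[OF Kc Kne JcK] by blast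
  have qP: "q \<in> P" using qK unfolding K_def by simp
  have qall: "J q \<le> J p" if "p \<in> P" for p
  proof (cases "p \<in> K")
    case True then show ?thesis using qmin by blast
  next
    case False
    then have "J p > M" using that unfolding K_def by auto
    moreover have "J q \<le> M" using qK unfolding K_def by simp
    ultimately show ?thesis by simp
  qed
  show ?thesis
  proof (intro exI conjI ballI)
    show "fst q \<in> {s0<..<s1}" "snd q \<in> {\<alpha>0<..<\<alpha>1}" using qP unfolding P_def by auto
    fix s \<alpha> assume "s \<in> {s0<..<s1}" "\<alpha> \<in> {\<alpha>0<..<\<alpha>1}"
    then have "(s, \<alpha>) \<in> P" unfolding P_def by simp
    then show "j (fst q) (snd q) \<le> j s \<alpha>" using qall[of "(s, \<alpha>)"] unfolding J_def by simp
  next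
    show "H0 (2 * fst q) (solS G (fst q) (snd q))"
      by (rule H0_sol[OF assms(5) snd_pos[OF qP]])
  qed
qed

end
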